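(* Let $X$ be a normal projective variety over a number field $K$ whose nef cone $\mathrm{Nef}(X)_{\mathbb{R}}\subseteq N^1(X)_{\mathbb{R}}$ is finitely generated (not necessarily rational). Let $f\colon X\to X$ be a surjective endomorphism such that $f^*$ maps each ray of $\mathrm{Nef}(X)_{\mathbb{R}}$ to itself and all eigenvalues of $f^*$ are positive. Then $\mathrm{Nef}(X)_{\mathbb{R}}$ separates the $\lambda$-eigenspace for some eigenvalue $\lambda$ of $f^*$ if and only if $f^*$ acts on $N^1(X)_{\mathbb{R}}$ as a dilation (multiplication by a scalar).
   Context: For an invertible diagonalizable linear map $T$ of a finite-dimensional real vector space $V$ and a full-dimensional pointed closed cone $C$ with $T(C)=C$ whose rays contain a basis of eigenvectors of $T$, $C$ separates the $\lambda$-eigenspace if there are $\lambda$-eigenvectors $v,w$ that do not lie on a common (proper) face of $C$. Here $T=f^*$ on $N^1(X)_{\mathbb{R}}$ and $C=\mathrm{Nef}(X)_{\mathbb{R}}$. *)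

theory Defs
  imports "HOL-Analysis.Analysis"
begin

definition finitely_generated_cone :: "'a::real_vector set \<Rightarrow> bool" where
  "finitely_generated_cone C \<longleftrightarrow> (\<exists>S. finite S \<and> C = convex_cone hull S)"

definition cone_ray :: "'a::euclidean_space set \<Rightarrow> 'a set \<Rightarrow> bool" where
  "cone_ray C R \<longleftrightarrow> R face_of C \<and> aff_dim R = 1"

definition is_eigenvalue :: "('a::real_vector \<Rightarrow> 'a) \<Rightarrow> real \<Rightarrow> bool" where
  "is_eigenvalue T mu \<longleftrightarrow> (\<exists>v. v \<noteq> 0 \<and> T v = mu *\<^sub>R v)"

definition separates_eigenspace ::
  "'a::real_vector set \<Rightarrow> ('a \<Rightarrow> 'a) \<Rightarrow> real \<Rightarrow> bool" where
  "separates_eigenspace C T mu \<longleftrightarrow>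
     (\<exists>v w. v \<noteq> 0 \<and> w \<noteq> 0 \<and> T v = mu *\<^sub>R v \<and> T w = mu *\<^sub>R w \<and>
        v \<in> C \<and> w \<in> C \<and>
        \<not> (\<exists>F. F face_of C \<and> F \<noteq> C \<and> v \<in> F \<and> w \<in> F))"

end

theory Submission
  imports Defs
begin


lemma zero_face:
  fixes C :: "'a::euclidean_space set"
  assumes cc: "conic C" and cv: "convex C" and z: "0 \<in> C"
    and pointed: "C \<inter> uminus ` C \<subseteq> {0}"
  shows "{0} face_of C"
proof -
  have "x \<in> {0} \<and> y \<in> {0}" if x: "x \<in> C" and y: "y \<in> C" and zz: "z \<in> {0::'a}" and seg: "z \<in> open_segment x y" for x y z
  proof -
  from seg obtain t where t: "0 < t" "t < 1" and zeq: "z = (1 - t) *\<^sub>R x + t *\<^sub>R y"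
    by (auto simp: in_segment)
  have e: "(1 - t) *\<^sub>R x = - (t *\<^sub>R y)" using zeq zz by (simp add: eq_neg_iff_add_eq_0)
  have c1: "(1 - t) *\<^sub>R x \<in> C" using cc x t by (simp add: conic_mul)
  have c2: "t *\<^sub>R y \<in> C" using cc y t by (simp add: conic_mul)
  have "(1 - t) *\<^sub>R x \<in> uminus ` C" using e c2 by auto
  then have "(1 - t) *\<^sub>R x = 0" using c1 pointed by auto
  then have "x = 0" using t by simp
  moreover have "t *\<^sub>R y = 0" using e \<open>(1 - t) *\<^sub>R x = 0\<close> by simp
  then have "y = 0" using t by simp
  ultimately show "x \<in> {0} \<and> y \<in> {0}" by simp
  qed
  then have all: "\<forall>x\<in>C. \<forall>y\<in>C. \<forall>z\<in>{0}. z \<in> open_segment x y \<longrightarrow> x \<in> {0} \<and> y \<in> {0}"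
    by blast
  show ?thesis unfolding face_of_def
  proof (intro conjI)
    show "{0} \<subseteq> C" using z by simp
    show "convex {0::'a}" by simp
  qed (rule all)
qed

lemma growth:
  fixes C :: "'a::euclidean_space set"
  assumes L: "linear L" and LC: "L ` C \<subseteq> C" and cc: "conic C"
    and apos: "\<And>y. y \<in> C \<Longrightarrow> a \<bullet> y \<ge> 0" and ae: "a \<bullet> e > 0"
    and Lu: "L u = m *\<^sub>R u" and m: "m > 0" and Le: "L e = l *\<^sub>R e"
    and eps: "\<epsilon> > 0" and ue: "u - \<epsilon> *\<^sub>R e \<in> C"
  shows "l \<le> m"
proof (rule ccontr)
  assume "\<not> l \<le> m"
  then have r1: "l / m > 1" using m by simp
  have step: "u - (t * (l / m)) *\<^sub>R e \<in> C" if "u - t *\<^sub>R e \<in> C" for t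
  proof -
    have "L (u - t *\<^sub>R e) \<in> C" using that LC by auto
    moreover have "L (u - t *\<^sub>R e) = m *\<^sub>R u - (t * l) *\<^sub>R e"
      using L Lu Le by (simp add: linear_diff linear_cmul)
    ultimately have "(1/m) *\<^sub>R (m *\<^sub>R u - (t * l) *\<^sub>R e) \<in> C"
      using cc m by (simp add: conic_mul)
    moreover have "(1/m) *\<^sub>R (m *\<^sub>R u - (t * l) *\<^sub>R e) = u - (t * (l / m)) *\<^sub>R e"
      using m by (simp add: algebra_simps)
    ultimately show ?thesis by simp
  qed
  have all: "u - (\<epsilon> * (l/m)^n) *\<^sub>R e \<in> C" for n
  proof (induction n)
    case 0 then show ?case using ue by simp
  next
    case (Suc n)
    from step[OF Suc] show ?case by (simp add: mult.assoc mult.commute mult.left_commute)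
  qed
  have bnd: "(l/m)^n \<le> (a \<bullet> u) / (\<epsilon> * (a \<bullet> e))" for n
  proof -
    have "a \<bullet> (u - (\<epsilon> * (l/m)^n) *\<^sub>R e) \<ge> 0" using apos all by blast
    then have "(\<epsilon> * (l/m)^n) * (a \<bullet> e) \<le> a \<bullet> u" by (simp add: inner_diff_right)
    then show ?thesis using eps ae by (simp add: field_simps)
  qed
  obtain n where "(a \<bullet> u) / (\<epsilon> * (a \<bullet> e)) < (l/m)^n" using real_arch_pow[OF r1] by blast
  with bnd[of n] show False by simp
qed



lemma ray_face:
  fixes C :: "'a::euclidean_space set"
  assumes cc: "conic C" and cv: "convex C" and z0: "0 \<in> C"
    and pointed: "C \<inter> uminus ` C \<subseteq> {0}"
    and apos: "\<And>y. y \<in> C \<Longrightarrow> a \<bullet> y \<ge> 0"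
    and apos2: "\<And>y. y \<in> C \<Longrightarrow> y \<noteq> 0 \<Longrightarrow> a \<bullet> y > 0"
    and ext: "e extreme_point_of (C \<inter> {y. a \<bullet> y = 1})"
  shows "cone_ray C {t *\<^sub>R e | t. t \<ge> 0}"
proof -
  define R where "R = {t *\<^sub>R e | t. t \<ge> 0}"
  have eK: "e \<in> C" "a \<bullet> e = 1" using ext by (auto simp: extreme_point_of_def)
  then have e0: "e \<noteq> 0" by auto
  have RC: "R \<subseteq> C" using eK cc by (auto simp: R_def conic_mul)
  have cvR: "convex R"
    unfolding convex_alt R_def
  proof clarify
    fix u t1 t2 :: real assume "0 \<le> u" "u \<le> 1" "0 \<le> t1" "0 \<le> t2"
    then show "\<exists>t. (1 - u) *\<^sub>R t1 *\<^sub>R e + u *\<^sub>R t2 *\<^sub>R e = t *\<^sub>R e \<and> 0 \<le> t"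
    proof (intro exI[of _ "(1-u)*t1 + u*t2"] conjI)
      show "0 \<le> (1-u)*t1 + u*t2" using \<open>0 \<le> u\<close> \<open>u \<le> 1\<close> \<open>0 \<le> t1\<close> \<open>0 \<le> t2\<close> by simp
    qed (simp add: algebra_simps)
  qed
  have zf: "{0} face_of C" using zero_face[OF cc cv z0 pointed] .
  have seg: "x \<in> R \<and> y \<in> R" if x: "x \<in> C" and y: "y \<in> C" and zR: "z \<in> R" and zs: "z \<in> open_segment x y" for x y z
  proof -
    obtain t where t: "t \<ge> 0" and zt: "z = t *\<^sub>R e" using zR by (auto simp: R_def)
    from zs obtain s where s: "0 < s" "s < 1" and zeq: "z = (1 - s) *\<^sub>R x + s *\<^sub>R y"
      by (auto simp: in_segment)
    have R0: "0 \<in> R" unfolding R_def by (rule CollectI, rule exI[of _ 0]) simp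
    show ?thesis
    proof (cases "t = 0")
      case True
      then have "z = 0" using zt by simp
      then have "x \<in> {0} \<and> y \<in> {0}" using face_ofD[OF zf zs x y] by simp
      then show ?thesis using R0 by simp
    next
      case False
      then have tp: "t > 0" using t by simp
      have az: "a \<bullet> z = t" using zt eK by simp
      show ?thesis
      proof (cases "x = 0")
        case True
        then have "z = s *\<^sub>R y" using zeq by simp
        then have "s *\<^sub>R y = t *\<^sub>R e" using zt by simp
        then have "(1/s) *\<^sub>R (s *\<^sub>R y) = (1/s) *\<^sub>R (t *\<^sub>R e)" by simp
        then have "y = (t / s) *\<^sub>R e" using s by simp
        then have "y \<in> R" using tp s unfolding R_def by (intro CollectI exI[of _ "t/s"]) simp
        then show ?thesis using True R0 by simp
      next
        case xn: False
        show ?thesis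
        proof (cases "y = 0")
          case True
          then have "z = (1 - s) *\<^sub>R x" using zeq by simp
          then have "(1 - s) *\<^sub>R x = t *\<^sub>R e" using zt by simp
          then have "(1/(1-s)) *\<^sub>R ((1 - s) *\<^sub>R x) = (1/(1-s)) *\<^sub>R (t *\<^sub>R e)" by simp
          then have "x = (t / (1 - s)) *\<^sub>R e" using s by simp
          then have "x \<in> R" using tp s unfolding R_def by (intro CollectI exI[of _ "t/(1-s)"]) simp
          then show ?thesis using True R0 by simp
        next
          case yn: False
          define \<alpha> where "\<alpha> = a \<bullet> x"
          define \<beta> where "\<beta> = a \<bullet> y"
          have ap: "\<alpha> > 0" using apos2[OF x xn] by (simp add: \<alpha>_def)
          have bp: "\<beta> > 0" using apos2[OF y yn] by (simp add: \<beta>_def)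
          define x' where "x' = (1 / \<alpha>) *\<^sub>R x"
          define y' where "y' = (1 / \<beta>) *\<^sub>R y"
          have x'K: "x' \<in> C \<inter> {y. a \<bullet> y = 1}" using cc x ap by (simp add: x'_def conic_mul \<alpha>_def)
          have y'K: "y' \<in> C \<inter> {y. a \<bullet> y = 1}" using cc y bp by (simp add: y'_def conic_mul \<beta>_def)
          have tsum: "(1 - s) * \<alpha> + s * \<beta> = t"
            using az zeq by (simp add: \<alpha>_def \<beta>_def inner_add_right)
          define c where "c = s * \<beta> / t"
          have pos1: "(1 - s) * \<alpha> > 0" using s ap by simp
          have pos2: "s * \<beta> > 0" using s bp by simp
          have lt: "s * \<beta> < t" using pos1 tsum by linarith
          have c01: "0 < c" "c < 1" using pos2 lt tp by (auto simp: c_def)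
          have xe: "x = \<alpha> *\<^sub>R x'" using ap by (simp add: x'_def)
          have ye: "y = \<beta> *\<^sub>R y'" using bp by (simp add: y'_def)
          have 1: "1 - c = (1 - s) * \<alpha> / t" using tsum tp by (simp add: c_def field_simps)
          have eeq: "e = (1 - c) *\<^sub>R x' + c *\<^sub>R y'"
          proof -
            have "e = (1 / t) *\<^sub>R z" using zt tp by simp
            also have "\<dots> = ((1 - s) * \<alpha> / t) *\<^sub>R x' + (s * \<beta> / t) *\<^sub>R y'"
              using zeq xe ye by (simp add: scaleR_add_right)
            finally show ?thesis using 1 by (simp add: c_def)
          qed
          have "x' = y'"
          proof (rule ccontr)
            assume "x' \<noteq> y'"
            then have "e \<in> open_segment x' y'" using eeq c01 by (auto simp: in_segment)
            then show False using ext x'K y'K by (auto simp: extreme_point_of_def)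
          qed
          then have "e = x'" using eeq by (simp add: algebra_simps)
          then have "x = \<alpha> *\<^sub>R e" "y = \<beta> *\<^sub>R e" using xe ye \<open>x' = y'\<close> by auto
          then show ?thesis using ap bp unfolding R_def by auto
        qed
      qed
    qed
  qed
  have all: "\<forall>x\<in>C. \<forall>y\<in>C. \<forall>z\<in>R. z \<in> open_segment x y \<longrightarrow> x \<in> R \<and> y \<in> R"
    using seg by blast
  have face: "R face_of C" unfolding face_of_def
  proof (intro conjI)
    show "R \<subseteq> C" by (rule RC)
    show "convex R" by (rule cvR)
  qed (rule all)
  have ad: "aff_dim R = 1"
  proof -
    have s1: "{0, e} \<subseteq> R" unfolding R_def by (auto intro: exI[of _ 0] exI[of _ 1])
    have s2: "R \<subseteq> affine hull {0, e}"
    proof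
      fix x assume "x \<in> R"
      then obtain t where "x = t *\<^sub>R e" by (auto simp: R_def)
      then show "x \<in> affine hull {0, e}" unfolding affine_hull_2
        by (intro CollectI exI[of _ "1 - t"] exI[of _ t]) simp
    qed
    have "aff_dim {0, e} \<le> aff_dim R" using aff_dim_subset[OF s1] .
    moreover have "aff_dim R \<le> aff_dim {0, e}" using aff_dim_subset[OF s2] by simp
    ultimately show ?thesis using e0 by simp
  qed
  show ?thesis using face ad unfolding cone_ray_def R_def by (rule conjI)
qed



theorem proposition4p3:
  fixes T :: "'a::euclidean_space \<Rightarrow> 'a" and C :: "'a set"
  assumes lin: "linear T" and bij: "bij T"
    and fg: "finitely_generated_cone C"
    and full: "interior C \<noteq> {}"
    and pointed: "C \<inter> uminus ` C \<subseteq> {0}"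
    and inv: "T ` C = C"
    and rays: "\<And>R. cone_ray C R \<Longrightarrow> T ` R = R"
    and pos: "\<And>mu. is_eigenvalue T mu \<Longrightarrow> mu > 0"
  shows "(\<exists>mu. is_eigenvalue T mu \<and> separates_eigenspace C T mu)
           \<longleftrightarrow> (\<exists>c. \<forall>x. T x = c *\<^sub>R x)"
proof -
  obtain S where S: "finite S" and CS: "C = convex_cone hull S"
    using fg by (auto simp: finitely_generated_cone_def)
  have cc: "conic C" and cv: "convex C" and z0: "0 \<in> C" and clC: "closed C"
    using CS conic_convex_cone_hull convex_convex_cone_hull
      convex_cone_contains_0[OF convex_cone_convex_cone_hull] closed_convex_cone_hull[OF S]
    by auto
  have riC: "rel_interior C = interior C" using rel_interior_nonempty_interior[OF full] .
  have spanC: "span C = UNIV"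
    using affine_hull_nonempty_interior[OF full] affine_hull_subset_span[of C] by auto
  show ?thesis
  proof
    assume "\<exists>mu. is_eigenvalue T mu \<and> separates_eigenspace C T mu"
    then obtain mu v w where mu: "is_eigenvalue T mu" and v: "v \<in> C" "T v = mu *\<^sub>R v"
      and w: "w \<in> C" "T w = mu *\<^sub>R w"
      and nf: "\<not> (\<exists>F. F face_of C \<and> F \<noteq> C \<and> v \<in> F \<and> w \<in> F)"
      by (auto simp: separates_eigenspace_def)
    have mup: "mu > 0" using pos[OF mu] .
    define u where "u = (1/2) *\<^sub>R (v + w)"
    have Tu: "T u = mu *\<^sub>R u" using lin v w
      by (simp add: u_def linear_add linear_cmul scaleR_add_right)
    have uC: "u \<in> C" using convexD[OF cv v(1) w(1), of "1/2" "1/2"]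
      by (simp add: u_def scaleR_add_right)
    have uint: "u \<in> interior C"
    proof (rule ccontr)
      assume nu: "u \<notin> interior C"
      then have "u \<notin> rel_interior C" using riC by simp
      then obtain b where b0: "b \<noteq> 0" and bC: "\<And>y. y \<in> closure C \<Longrightarrow> b \<bullet> u \<le> b \<bullet> y"
        and bri: "\<And>y. y \<in> rel_interior C \<Longrightarrow> b \<bullet> u < b \<bullet> y"
        using supporting_hyperplane_relative_frontier[OF cv] uC closure_subset by blast
      define F where "F = C \<inter> {y. b \<bullet> y = b \<bullet> u}"
      have Ff: "F face_of C" unfolding F_def
        using face_of_Int_supporting_hyperplane_ge[OF cv, where a=b and b="b \<bullet> u"] bC closure_subset by blast
      obtain y where "y \<in> interior C" using full by blast
      then have "y \<notin> F" using bri[of y] riC by (auto simp: F_def)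
      moreover have "y \<in> C" using \<open>y \<in> interior C\<close> interior_subset by blast
      ultimately have "F \<noteq> C" by blast
      have bv: "b \<bullet> v \<ge> b \<bullet> u" and bw: "b \<bullet> w \<ge> b \<bullet> u" using bC v w closure_subset by blast+
      have "b \<bullet> u = (b \<bullet> v + b \<bullet> w) / 2" by (simp add: u_def inner_add_right)
      then have "b \<bullet> v = b \<bullet> u" "b \<bullet> w = b \<bullet> u" using bv bw by simp_all
      then have "v \<in> F" "w \<in> F" using v w by (auto simp: F_def)
      then show False using nf Ff \<open>F \<noteq> C\<close> by blast
    qed
    define S' where "S' = S - {0}"
    have CS': "C = convex_cone hull S'"
    proof (cases "0 \<in> S")
      case True
      then have "S = insert 0 S'" by (auto simp: S'_def)
      then show ?thesis using CS hull_redundant[OF convex_cone_contains_0[OF convex_cone_convex_cone_hull], of S'] by simp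
    next
      case False
      then show ?thesis using CS by (simp add: S'_def)
    qed
    have S'ne: "S' \<noteq> {}"
    proof
      assume "S' = {}"
      then have "C = {0}" using CS' by (simp add: convex_cone_hull_empty)
      then show False using full by simp
    qed
    define P where "P = convex hull S'"
    have CP: "C = conic hull P" using CS' convex_cone_hull_separate_nonempty[OF S'ne] by (simp add: P_def)
    have PC: "P \<subseteq> C" unfolding CP by (rule hull_subset)
    have cpP: "compact P" using S by (simp add: P_def S'_def finite_imp_compact_convex_hull)
    have cvP: "convex P" by (simp add: P_def)
    have zf: "{0} face_of C" using zero_face[OF cc cv z0 pointed] .
    have P0: "0 \<notin> P"
    proof
      assume "0 \<in> P"
      then have "{0} face_of P" using face_of_subset[OF zf _ PC] by simp
      then have "0 extreme_point_of (convex hull S')" by (simp add: face_of_singleton P_def)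
      then have "0 \<in> S'" by (rule extreme_point_of_convex_hull)
      then show False by (simp add: S'_def)
    qed
    obtain a b where a0: "a \<noteq> 0" and b0: "0 < b" and aP: "\<And>x. x \<in> P \<Longrightarrow> a \<bullet> x > b"
      using separating_hyperplane_closed_0[OF cvP compact_imp_closed[OF cpP] P0] by blast
    have Cexp: "\<exists>c x. y = c *\<^sub>R x \<and> 0 \<le> c \<and> x \<in> P" if "y \<in> C" for y
      using that CP conic_hull_explicit[of P] by auto
    have apos: "a \<bullet> y \<ge> 0" if yC: "y \<in> C" for y
    proof -
      obtain c x where "y = c *\<^sub>R x" "0 \<le> c" "x \<in> P" using Cexp[OF yC] by blast
      then show ?thesis using aP[of x] b0 by simp
    qed
    have apos2: "a \<bullet> y > 0" if yC: "y \<in> C" and yn: "y \<noteq> 0" for y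
    proof -
      obtain c x where "y = c *\<^sub>R x" "0 \<le> c" "x \<in> P" using Cexp[OF yC] by blast
      then show ?thesis using aP[of x] b0 yn by (cases "c = 0") auto
    qed
    define K where "K = C \<inter> {y. a \<bullet> y = 1}"
    have Kimg: "K = (\<lambda>x. (1 / (a \<bullet> x)) *\<^sub>R x) ` P"
    proof
      show "K \<subseteq> (\<lambda>x. (1 / (a \<bullet> x)) *\<^sub>R x) ` P"
      proof
        fix y assume "y \<in> K"
        then have yC: "y \<in> C" and ay: "a \<bullet> y = 1" by (auto simp: K_def)
        obtain c x where yx: "y = c *\<^sub>R x" "0 \<le> c" "x \<in> P" using Cexp[OF yC] by blast
        have "c * (a \<bullet> x) = 1" using ay yx by simp
        then have "c = 1 / (a \<bullet> x)" using aP[OF yx(3)] b0 by (simp add: field_simps)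
        then show "y \<in> (\<lambda>x. (1 / (a \<bullet> x)) *\<^sub>R x) ` P" using yx by auto
      qed
    next
      show "(\<lambda>x. (1 / (a \<bullet> x)) *\<^sub>R x) ` P \<subseteq> K"
      proof
        fix y assume "y \<in> (\<lambda>x. (1 / (a \<bullet> x)) *\<^sub>R x) ` P"
        then obtain x where x: "x \<in> P" and yx: "y = (1 / (a \<bullet> x)) *\<^sub>R x" by blast
        have ax: "a \<bullet> x > 0" using aP[OF x] b0 by simp
        have "y \<in> C" using yx cc PC x ax by (simp add: conic_mul subset_iff)
        moreover have "a \<bullet> y = 1" using yx ax by simp
        ultimately show "y \<in> K" by (simp add: K_def)
      qed
    qed
    have cpK: "compact K" unfolding Kimg
    proof (rule compact_continuous_image[OF _ cpP])
      have "\<forall>x\<in>P. a \<bullet> x \<noteq> 0" using aP b0 by (metis less_irrefl order_less_trans)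
      then show "continuous_on P (\<lambda>x. (1 / (a \<bullet> x)) *\<^sub>R x)"
        by (intro continuous_intros) auto
    qed
    have cvK: "convex K" unfolding K_def by (intro convex_Int cv convex_hyperplane)
    have KM: "K = convex hull {x. x extreme_point_of K}" using Krein_Milman_Minkowski[OF cpK cvK] .
    obtain r where r: "r > 0" "ball u r \<subseteq> C" using uint mem_interior by blast
    have injT: "inj T" and surjT: "surj T" using bij by (auto simp: bij_def)
    have T0: "T 0 = 0" using lin by (simp add: linear_0)
    define Ti where "Ti = inv T"
    have TiT: "Ti (T x) = x" for x using injT by (simp add: Ti_def)
    have TTi: "T (Ti x) = x" for x using surjT by (simp add: Ti_def surj_f_inv_f)
    have linTi: "linear Ti"
    proof (rule linearI)
      fix x y
      show "Ti (x + y) = Ti x + Ti y"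
        by (metis TiT TTi lin linear_add)
      fix c :: real
      show "Ti (c *\<^sub>R x) = c *\<^sub>R Ti x"
        by (metis TiT TTi lin linear_cmul)
    qed
    have TiC: "Ti ` C \<subseteq> C"
    proof
      fix y assume "y \<in> Ti ` C"
      then obtain x where "x \<in> C" "y = Ti x" by blast
      then obtain z where "z \<in> C" "x = T z" using inv by blast
      then show "y \<in> C" using \<open>y = Ti x\<close> TiT by simp
    qed
    have Tiev: "Ti x = (1/m) *\<^sub>R x" if "T x = m *\<^sub>R x" "m > 0" for x m
    proof -
      have "Ti x = Ti ((1/m) *\<^sub>R T x)" using that by simp
      also have "\<dots> = (1/m) *\<^sub>R Ti (T x)" by (simp add: linear_cmul[OF linTi])
      also have "\<dots> = (1/m) *\<^sub>R x" by (simp add: TiT)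
      finally show ?thesis .
    qed
    have TiCu: "Ti u = (1/mu) *\<^sub>R u" using Tiev[OF Tu mup] .
    have ext_eig: "T e = mu *\<^sub>R e" if ext: "e extreme_point_of K" for e
    proof -
      have eK: "e \<in> C" "a \<bullet> e = 1" using ext by (auto simp: extreme_point_of_def K_def)
      then have e0: "e \<noteq> 0" by auto
      have "cone_ray C {t *\<^sub>R e | t. t \<ge> 0}"
        using ray_face[OF cc cv z0 pointed apos apos2] ext by (simp add: K_def)
      then have RR: "T ` {t *\<^sub>R e | t. t \<ge> 0} = {t *\<^sub>R e | t. t \<ge> 0}" by (rule rays)
      have eR: "e \<in> {t *\<^sub>R e | t. t \<ge> 0}" by (rule CollectI, rule exI[of _ 1]) simp
      have "T e \<in> T ` {t *\<^sub>R e | t. t \<ge> 0}" using eR by (rule imageI)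
      then have "T e \<in> {t *\<^sub>R e | t. t \<ge> 0}" by (simp only: RR)
      then obtain l where l: "l \<ge> 0" and Te: "T e = l *\<^sub>R e" by blast
      have "T e \<noteq> 0" using e0 injT T0 by (metis injD)
      then have lp: "l > 0" using l Te by (cases "l = 0") auto
      define \<epsilon> where "\<epsilon> = r / (2 * norm e)"
      have epsp: "\<epsilon> > 0" using r e0 by (simp add: \<epsilon>_def)
      have "u - \<epsilon> *\<^sub>R e \<in> ball u r" using r e0 epsp
        by (simp add: dist_norm \<epsilon>_def)
      then have ueC: "u - \<epsilon> *\<^sub>R e \<in> C" using r by blast
      have ae: "a \<bullet> e > 0" using eK by simp
      have "l \<le> mu" using growth[OF lin _ cc apos ae Tu mup Te epsp ueC] inv by simp
      moreover have "1/l \<le> 1/mu"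
      proof (rule growth[OF linTi TiC cc apos ae TiCu _ _ epsp ueC])
        show "0 < 1/mu" using mup by simp
        show "Ti e = (1/l) *\<^sub>R e" using Tiev[OF Te lp] .
      qed
      then have "mu \<le> l" using mup lp by (simp add: divide_simps)
      ultimately have "l = mu" by simp
      then show ?thesis using Te by simp
    qed
    define E where "E = {x. T x = mu *\<^sub>R x}"
    have subE: "subspace E" unfolding E_def subspace_def
      using lin by (simp add: linear_0 linear_add linear_cmul scaleR_add_right)
    have hE: "convex hull {x. x extreme_point_of K} \<subseteq> E"
      by (rule hull_minimal) (use ext_eig subspace_imp_convex[OF subE] in \<open>auto simp: E_def\<close>)
    have KE: "K \<subseteq> E" by (subst KM) (rule hE)
    have CE: "C \<subseteq> E"
    proof
      fix y assume yC: "y \<in> C"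
      show "y \<in> E"
      proof (cases "y = 0")
        case True then show ?thesis using subE subspace_0 by blast
      next
        case False
        then have ay: "a \<bullet> y > 0" using apos2 yC by blast
        have "(1 / (a \<bullet> y)) *\<^sub>R y \<in> K" using yC ay cc by (simp add: K_def conic_mul)
        then have "(1 / (a \<bullet> y)) *\<^sub>R y \<in> E" using KE by blast
        then have "(a \<bullet> y) *\<^sub>R ((1 / (a \<bullet> y)) *\<^sub>R y) \<in> E" using subE subspace_scale by blast
        then show ?thesis using ay by simp
      qed
    qed
    have "span C \<subseteq> E" using span_minimal[OF CE subE] .
    then have "\<forall>x. T x = mu *\<^sub>R x" using spanC by (auto simp: E_def)
    then show "\<exists>c. \<forall>x. T x = c *\<^sub>R x" by blast
  next
    assume "\<exists>c. \<forall>x. T x = c *\<^sub>R x"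
    then obtain c where Tc: "\<And>x. T x = c *\<^sub>R x" by blast
    obtain u where uint: "u \<in> interior C" using full by blast
    have u0: "u \<noteq> 0"
    proof
      assume "u = 0"
      then obtain r where r: "r > 0" "ball 0 r \<subseteq> C" using uint mem_interior by blast
      obtain b :: 'a where b: "b \<in> Basis" using nonempty_Basis by blast
      define x where "x = (r/2) *\<^sub>R b"
      have nx: "norm x = r/2" using r b by (simp add: x_def)
      have "x \<in> C" "-x \<in> C" using r nx by (auto simp: subset_iff)
      then have "x \<in> C \<inter> uminus ` C" by (auto intro: image_eqI[of _ _ "-x"])
      then have "x = 0" using pointed by auto
      then show False using nx r by simp
    qed
    have uC: "u \<in> C" using uint interior_subset by blast
    have ev: "is_eigenvalue T c" using u0 Tc by (auto simp: is_eigenvalue_def)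
    have "\<not> (\<exists>F. F face_of C \<and> F \<noteq> C \<and> u \<in> F \<and> u \<in> F)"
      using face_of_subset_rel_boundary riC uint by blast
    then have "separates_eigenspace C T c" using u0 uC Tc
      unfolding separates_eigenspace_def by blast
    then show "\<exists>mu. is_eigenvalue T mu \<and> separates_eigenspace C T mu" using ev by blast
  qed
qed

end
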